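(* Let $(R,\mathfrak m,k)$ be a Noetherian local ring of prime characteristic $p$ satisfying $$(0:\mathfrak m^p)_R:=\{x\in R \mid \mathfrak m^p x=0\}\not\subseteq \mathfrak m^p .$$ If $M$ is a finitely generated $R$-module such that $\operatorname{Tor}^R_j(M,{}^{\phi^r}\!R)=0$ for some integers $j\ge 1$ and $r\ge 1$, then $M$ is a projective (equivalently, free) $R$-module.
   Context: $\phi:R\to R$ denotes the Frobenius homomorphism $\phi(a)=a^p$. For $r\ge 1$, ${}^{\phi^r}\!R$ denotes the ring $R$ regarded as an $R$-module via $\phi^r$, i.e. $a\cdot b=a^{p^r}b$ for $a\in R$, $b\in {}^{\phi^r}\!R$. *)

theory Defs
  imports Complex_Main "HOL-Computational_Algebra.Primes"
begin

definition is_ideal :: "'a::comm_ring_1 set \<Rightarrow> bool" where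
  "is_ideal I \<longleftrightarrow> 0 \<in> I \<and> (\<forall>x\<in>I. \<forall>y\<in>I. x + y \<in> I) \<and> (\<forall>a x. x \<in> I \<longrightarrow> a * x \<in> I)"

definition ideal_gen :: "'a::comm_ring_1 set \<Rightarrow> 'a set" where
  "ideal_gen S = \<Inter>{I. is_ideal I \<and> S \<subseteq> I}"

definition noetherian_ring :: "'a::comm_ring_1 itself \<Rightarrow> bool" where
  "noetherian_ring _ \<longleftrightarrow> (\<forall>I::'a set. is_ideal I \<longrightarrow> (\<exists>S. finite S \<and> I = ideal_gen S))"

definition maximal_ideal :: "'a::comm_ring_1 set \<Rightarrow> bool" where
  "maximal_ideal m \<longleftrightarrow> is_ideal m \<and> m \<noteq> UNIV \<and>
     (\<forall>J. is_ideal J \<and> m \<subseteq> J \<longrightarrow> J = m \<or> J = UNIV)"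

definition local_ring :: "'a::comm_ring_1 itself \<Rightarrow> bool" where
  "local_ring _ \<longleftrightarrow> (\<exists>!m::'a set. maximal_ideal m)"

definition max_ideal :: "'a::comm_ring_1 itself \<Rightarrow> 'a set" where
  "max_ideal _ = (THE m. maximal_ideal m)"

definition ideal_pow :: "'a::comm_ring_1 set \<Rightarrow> nat \<Rightarrow> 'a set" where
  "ideal_pow I n = ideal_gen {(\<Prod>i<n. f i) | f. \<forall>i<n. f i \<in> I}"

definition annihilator :: "'a::comm_ring_1 set \<Rightarrow> 'a set" where
  "annihilator J = {x. \<forall>y\<in>J. y * x = 0}"

definition vecs :: "nat \<Rightarrow> (nat \<Rightarrow> 'a::zero) set" where
  "vecs n = {v. \<forall>k\<ge>n. v k = 0}"

definition mat_app :: "nat \<Rightarrow> nat \<Rightarrow> (nat \<Rightarrow> nat \<Rightarrow> 'a::comm_ring_1) \<Rightarrow> (nat \<Rightarrow> 'a) \<Rightarrow> (nat \<Rightarrow> 'a)" where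
  "mat_app m n A v = (\<lambda>k. if k < m then (\<Sum>l<n. A k l * v l) else 0)"

definition frob_mat :: "nat \<Rightarrow> (nat \<Rightarrow> nat \<Rightarrow> 'a::comm_ring_1) \<Rightarrow> (nat \<Rightarrow> nat \<Rightarrow> 'a)" where
  "frob_mat r A = (\<lambda>k l. (A k l) ^ (CHAR('a) ^ r))"

text \<open>A resolution  ... \<rightarrow> R^(b 2) \<rightarrow>(d 1) R^(b 1) \<rightarrow>(d 0) R^(b 0) \<rightarrow>(eps) M \<rightarrow> 0 by finite
  free modules; d i is the matrix of the map F_(i+1) \<rightarrow> F_i.  The module M is the whole
  type 'm with scalar multiplication scale.\<close>
definition free_resolution ::
  "('a::comm_ring_1 \<Rightarrow> 'm::ab_group_add \<Rightarrow> 'm) \<Rightarrow> (nat \<Rightarrow> nat) \<Rightarrow> (nat \<Rightarrow> nat \<Rightarrow> nat \<Rightarrow> 'a)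
     \<Rightarrow> ((nat \<Rightarrow> 'a) \<Rightarrow> 'm) \<Rightarrow> bool" where
  "free_resolution scale b d eps \<longleftrightarrow>
     (\<forall>v\<in>vecs (b 0). \<forall>w\<in>vecs (b 0). eps (\<lambda>k. v k + w k) = eps v + eps w) \<and>
     (\<forall>c. \<forall>v\<in>vecs (b 0). eps (\<lambda>k. c * v k) = scale c (eps v)) \<and>
     eps ` vecs (b 0) = UNIV \<and>
     {v \<in> vecs (b 0). eps v = 0} = mat_app (b 0) (b 1) (d 0) ` vecs (b 1) \<and>
     (\<forall>i. {v \<in> vecs (b (Suc i)). mat_app (b i) (b (Suc i)) (d i) v = (\<lambda>_. 0)}
            = mat_app (b (Suc i)) (b (Suc (Suc i))) (d (Suc i)) ` vecs (b (Suc (Suc i))))"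

text \<open>Tor_j^R(M, phi^r R) = 0 for j \<ge> 1, computed from a finite free resolution F of M:
  F_i \<otimes>_R phi^r R = R^(b i) and d \<otimes> 1 is the matrix with entries raised to p^r.\<close>
definition tor_frob_vanishes ::
  "('a::comm_ring_1 \<Rightarrow> 'm::ab_group_add \<Rightarrow> 'm) \<Rightarrow> nat \<Rightarrow> nat \<Rightarrow> bool" where
  "tor_frob_vanishes scale j r \<longleftrightarrow>
     (\<exists>b d eps. free_resolution scale b d eps \<and>
        {v \<in> vecs (b j). mat_app (b (j - 1)) (b j) (frob_mat r (d (j - 1))) v = (\<lambda>_. 0)}
          \<subseteq> mat_app (b j) (b (Suc j)) (frob_mat r (d j)) ` vecs (b (Suc j)))"

definition fin_gen_module :: "('a::comm_ring_1 \<Rightarrow> 'm::ab_group_add \<Rightarrow> 'm) \<Rightarrow> bool" where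
  "fin_gen_module scale \<longleftrightarrow> (\<exists>S. finite S \<and> Modules.module.span scale S = UNIV)"

definition free_module :: "('a::comm_ring_1 \<Rightarrow> 'm::ab_group_add \<Rightarrow> 'm) \<Rightarrow> bool" where
  "free_module scale \<longleftrightarrow> (\<exists>B. \<not> Modules.module.dependent scale B \<and> Modules.module.span scale B = UNIV)"

end

theory Submission
  imports Defs
begin


lemma ideal_gen_ideal: "is_ideal (ideal_gen S)"
  unfolding is_ideal_def ideal_gen_def by auto

lemma ideal_gen_sup: "S \<subseteq> ideal_gen S"
  unfolding ideal_gen_def by auto

lemma ideal_0: "is_ideal I \<Longrightarrow> 0 \<in> I" by (simp add: is_ideal_def)
lemma ideal_add: "is_ideal I \<Longrightarrow> a \<in> I \<Longrightarrow> b \<in> I \<Longrightarrow> a + b \<in> I" by (simp add: is_ideal_def)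
lemma ideal_mult: "is_ideal I \<Longrightarrow> a \<in> I \<Longrightarrow> c * a \<in> I" by (simp add: is_ideal_def)
lemma ideal_mult2: "is_ideal I \<Longrightarrow> a \<in> I \<Longrightarrow> a * c \<in> I" by (metis ideal_mult mult.commute)
lemma ideal_uminus: "is_ideal I \<Longrightarrow> a \<in> I \<Longrightarrow> - a \<in> I"
  using ideal_mult[of I a "-1"] by simp
lemma ideal_diff: "is_ideal I \<Longrightarrow> a \<in> I \<Longrightarrow> b \<in> I \<Longrightarrow> a - b \<in> I"
  using ideal_add ideal_uminus by (metis diff_conv_add_uminus)
lemma ideal_sum: "is_ideal I \<Longrightarrow> (\<And>i. i \<in> A \<Longrightarrow> f i \<in> I) \<Longrightarrow> sum f A \<in> I"
  by (induction A rule: infinite_finite_induct) (auto simp: ideal_0 ideal_add)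

lemma unit_of_maximal:
  fixes m :: "'a::comm_ring_1 set"
  assumes loc: "\<And>m'. maximal_ideal m' \<Longrightarrow> m' = m" and a: "a \<notin> m"
  shows "\<exists>u. u * a = 1"
proof (rule ccontr)
  assume nu: "\<not> (\<exists>u. u * a = 1)"
  define I0 where "I0 = {c * a | c. True}"
  define \<A> where "\<A> = {I. is_ideal I \<and> 1 \<notin> I \<and> I0 \<subseteq> I}"
  have I0: "I0 \<in> \<A>"
    unfolding \<A>_def
  proof (intro CollectI conjI)
    show "is_ideal I0" unfolding is_ideal_def I0_def
    proof (intro conjI allI impI ballI)
      show "0 \<in> {c * a |c. True}" by (metis (mono_tags) mult_zero_left mem_Collect_eq)
    next
      fix x y assume "x \<in> {c * a |c. True}" "y \<in> {c * a |c. True}"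
      then obtain c d where "x = c * a" "y = d * a" by blast
      then have "x + y = (c + d) * a" by (simp add: distrib_right)
      then show "x + y \<in> {c * a |c. True}" by blast
    next
      fix e x assume "x \<in> {c * a |c. True}"
      then obtain c where "x = c * a" by blast
      then have "e * x = (e * c) * a" by (simp add: mult.assoc)
      then show "e * x \<in> {c * a |c. True}" by blast
    qed
    show "1 \<notin> I0" using nu unfolding I0_def by auto
  qed simp
  have "\<exists>M\<in>\<A>. \<forall>X\<in>\<A>. M \<subseteq> X \<longrightarrow> X = M"
  proof (rule subset_Zorn_nonempty)
    show "\<A> \<noteq> {}" using I0 by auto
    fix C assume C: "C \<noteq> {}" "subset.chain \<A> C"
    then have Cs: "C \<subseteq> \<A>" and ch: "\<forall>X\<in>C. \<forall>Y\<in>C. X \<subseteq> Y \<or> Y \<subseteq> X"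
      by (auto simp: subset_chain_def)
    have "is_ideal (\<Union>C)"
      unfolding is_ideal_def
    proof (intro conjI allI ballI impI)
      obtain X where "X \<in> C" using C by auto
      then show "0 \<in> \<Union>C" using Cs unfolding \<A>_def by (metis (no_types, lifting) ideal_0 UnionI mem_Collect_eq subsetD)
    next
      fix x y assume "x \<in> \<Union>C" "y \<in> \<Union>C"
      then obtain X Y where XY: "X \<in> C" "Y \<in> C" "x \<in> X" "y \<in> Y" by auto
      show "x + y \<in> \<Union>C"
      proof (cases "X \<subseteq> Y")
        case True then show ?thesis using XY Cs unfolding \<A>_def by (auto intro: ideal_add)
      next
        case False then have "Y \<subseteq> X" using ch XY by blast
        then show ?thesis using XY Cs unfolding \<A>_def by (auto intro: ideal_add)
      qed
    next
      fix c x assume "x \<in> \<Union>C"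
      then show "c * x \<in> \<Union>C" using Cs unfolding \<A>_def by (auto intro: ideal_mult)
    qed
    moreover have "1 \<notin> \<Union>C" using Cs unfolding \<A>_def by auto
    moreover have "I0 \<subseteq> \<Union>C" using C Cs unfolding \<A>_def by auto
    ultimately show "\<Union>C \<in> \<A>" unfolding \<A>_def by auto
  qed
  then obtain M where M: "M \<in> \<A>" "\<And>X. X \<in> \<A> \<Longrightarrow> M \<subseteq> X \<Longrightarrow> X = M" by blast
  have "maximal_ideal M"
    unfolding maximal_ideal_def
  proof (intro conjI allI impI)
    show "is_ideal M" using M unfolding \<A>_def by auto
    show "M \<noteq> UNIV" using M unfolding \<A>_def by auto
    fix J assume J: "is_ideal J \<and> M \<subseteq> J"
    show "J = M \<or> J = UNIV"
    proof (cases "1 \<in> J")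
      case True
      then have "J = UNIV" using J ideal_mult[of J 1] by auto
      then show ?thesis by simp
    next
      case False
      then have "J \<in> \<A>" using J M unfolding \<A>_def by auto
      then show ?thesis using M J by auto
    qed
  qed
  then have "M = m" using loc by blast
  moreover have "a \<in> I0" unfolding I0_def by (metis (mono_tags) mult_1 mem_Collect_eq)
  ultimately show False using M a unfolding \<A>_def by auto
qed




definition lc :: "(nat \<Rightarrow> 'a::comm_ring_1) \<Rightarrow> (nat \<Rightarrow> 'a) list \<Rightarrow> nat \<Rightarrow> 'a" where
  "lc c ys = (\<lambda>k. \<Sum>i<length ys. c i * (ys!i) k)"

definition supp_in :: "(nat \<Rightarrow> 'a::zero) \<Rightarrow> nat set \<Rightarrow> bool" where
  "supp_in v J \<longleftrightarrow> (\<forall>k. k \<notin> J \<longrightarrow> v k = 0)"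

definition inI :: "(nat \<Rightarrow> 'a) \<Rightarrow> 'a set \<Rightarrow> bool" where
  "inI v S \<longleftrightarrow> (\<forall>k. v k \<in> S)"

definition proj :: "nat \<Rightarrow> 'a::comm_ring_1 \<Rightarrow> (nat \<Rightarrow> 'a) \<Rightarrow> (nat \<Rightarrow> 'a) \<Rightarrow> (nat \<Rightarrow> 'a)" where
  "proj p a y w = (\<lambda>k. w k - w p * a * y k)"

definition condm :: "'a::comm_ring_1 set \<Rightarrow> (nat \<Rightarrow> 'a) list \<Rightarrow> bool" where
  "condm m ys \<longleftrightarrow> (\<forall>c. inI (lc c ys) m \<longrightarrow> (\<exists>c'. inI c' m \<and> lc c ys = lc c' ys))"

lemma lc_Nil[simp]: "lc c [] = (\<lambda>k. 0)"
  by (simp add: lc_def)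

lemma lc_Cons: "lc c (y#ys) = (\<lambda>k. c 0 * y k + lc (\<lambda>i. c (Suc i)) ys k)"
  unfolding lc_def by (simp add: sum.lessThan_Suc_shift del: sum.lessThan_Suc)

lemma lc_Cons_app: "lc c (y#ys) k = c 0 * y k + lc (\<lambda>i. c (Suc i)) ys k"
  by (simp add: lc_Cons)

lemma lc_zero_coef[simp]: "lc (\<lambda>i. 0) ys = (\<lambda>k. 0)"
  by (simp add: lc_def)

lemma lc_add_coef: "lc (\<lambda>i. c i + d i) ys = (\<lambda>k. lc c ys k + lc d ys k)"
  unfolding lc_def by (simp add: sum.distrib distrib_right)

lemma lc_diff_coef: "lc (\<lambda>i. c i - d i) ys = (\<lambda>k. lc c ys k - lc d ys k)"
  unfolding lc_def by (simp add: sum_subtractf left_diff_distrib)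

lemma lc_scale_coef: "lc (\<lambda>i. a * c i) ys = (\<lambda>k. a * lc c ys k)"
  unfolding lc_def by (simp add: sum_distrib_left mult.assoc)

lemma lc_cong: "(\<And>i. i < length ys \<Longrightarrow> c i = d i) \<Longrightarrow> lc c ys = lc d ys"
  unfolding lc_def by (intro ext sum.cong) auto

lemma lc_shift: "lc c ys = lc (\<lambda>i. if i = 0 then 0 else c (i - 1)) (y#ys)"
  by (simp add: lc_Cons)

lemma lc_proj: "lc c (map (proj p a y) ys) = proj p a y (lc c ys)"
  unfolding lc_def proj_def
  by (auto simp: algebra_simps sum_subtractf sum_distrib_right sum_distrib_left)

lemma proj_lin: "proj p a y (\<lambda>k. b * z k + w k) = (\<lambda>k. b * proj p a y z k + proj p a y w k)"
  unfolding proj_def by (auto simp: algebra_simps)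

lemma proj_y: "a * y p = 1 \<Longrightarrow> proj p a y y = (\<lambda>k. 0)"
  unfolding proj_def by (auto simp: mult.commute)

lemma proj_p: "a * y p = 1 \<Longrightarrow> proj p a y w p = 0"
  unfolding proj_def by (simp add: mult.assoc)

lemma proj_idem: "w p = 0 \<Longrightarrow> proj p a y w = w"
  unfolding proj_def by simp

lemma proj_supp: "supp_in w J \<Longrightarrow> supp_in y J \<Longrightarrow> a * y p = 1 \<Longrightarrow> supp_in (proj p a y w) (J - {p})"
  unfolding supp_in_def using proj_p[of a y p w] by (auto simp: proj_def)

lemma lc_supp: "(\<And>y. y \<in> set ys \<Longrightarrow> supp_in y J) \<Longrightarrow> supp_in (lc c ys) J"
  unfolding supp_in_def lc_def by (auto intro!: sum.neutral) (metis nth_mem mult_zero_right)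

locale lr =
  fixes m :: "'a::comm_ring_1 set"
  assumes m_ideal: "is_ideal m" and one_notin: "1 \<notin> m"
    and unitI: "\<And>a. a \<notin> m \<Longrightarrow> \<exists>u. u * a = 1"
begin

lemma m0: "0 \<in> m" using m_ideal ideal_0 by blast

lemma one_minus_unit: "a \<in> m \<Longrightarrow> \<exists>u. u * (1 - a) = 1"
proof -
  assume a: "a \<in> m"
  have "1 - a \<notin> m"
  proof
    assume "1 - a \<in> m"
    then have "(1 - a) + a \<in> m" using a m_ideal ideal_add by blast
    then show False using one_notin by simp
  qed
  then show ?thesis using unitI by blast
qed

lemma inI_lc: "inI c m \<Longrightarrow> inI (lc c ys) m"
  unfolding inI_def lc_def using m_ideal by (auto intro!: ideal_sum ideal_mult2)

lemma lemL_aux: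
  "length ys = n \<Longrightarrow> (\<forall>z\<in>set ys. supp_in z J) \<Longrightarrow> condm m ys \<Longrightarrow>
   \<exists>I\<subseteq>J. (\<forall>v. supp_in v J \<longrightarrow> (\<exists>c g. supp_in g I \<and> v = (\<lambda>k. lc c ys k + g k)))
        \<and> (\<forall>c. supp_in (lc c ys) I \<longrightarrow> lc c ys = (\<lambda>k. 0))"
proof (induction n arbitrary: ys J)
  case 0
  then have "ys = []" by simp
  then show ?case by (intro exI[of _ J]) auto
next
  case (Suc n ys0 J)
  then obtain y ys where ys0: "ys0 = y#ys" and len: "length ys = n" by (cases ys0) auto
  have supp: "\<forall>z\<in>set (y#ys). supp_in z J" using Suc.prems ys0 by simp
  have cnd: "condm m (y#ys)" using Suc.prems ys0 by simp
  have "\<exists>I\<subseteq>J. (\<forall>v. supp_in v J \<longrightarrow> (\<exists>c g. supp_in g I \<and> v = (\<lambda>k. lc c (y#ys) k + g k)))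
        \<and> (\<forall>c. supp_in (lc c (y#ys)) I \<longrightarrow> lc c (y#ys) = (\<lambda>k. 0))"
  proof (cases "inI y m")
    case True
    define \<delta> where "\<delta> = (\<lambda>i::nat. if i = 0 then (1::'a) else 0)"
    have "lc \<delta> (y#ys) = y" by (simp add: lc_Cons \<delta>_def)
    then obtain c' where c': "inI c' m" "y = lc c' (y#ys)"
      using cnd True unfolding condm_def by metis
    have c'0: "c' 0 \<in> m" using c' unfolding inI_def by auto
    obtain u where u: "u * (1 - c' 0) = 1" using one_minus_unit[OF c'0] by blast
    define e where "e = (\<lambda>i. u * c' (Suc i))"
    have ye: "y = lc e ys"
    proof
      fix k
      have "y k = c' 0 * y k + lc (\<lambda>i. c' (Suc i)) ys k" using c'(2) by (metis lc_Cons_app)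
      then have "(1 - c' 0) * y k = lc (\<lambda>i. c' (Suc i)) ys k" by (simp add: algebra_simps)
      then have "u * ((1 - c' 0) * y k) = u * lc (\<lambda>i. c' (Suc i)) ys k" by simp
      then show "y k = lc e ys k" using u unfolding e_def lc_scale_coef by (simp add: mult.assoc[symmetric])
    qed
    have cys: "condm m ys"
      unfolding condm_def
    proof (intro allI impI)
      fix c assume "inI (lc c ys) m"
      moreover have "lc c ys = lc (\<lambda>i. if i = 0 then 0 else c (i - 1)) (y#ys)" by (rule lc_shift)
      ultimately obtain d where d: "inI d m" "lc c ys = lc d (y#ys)"
        using cnd unfolding condm_def by metis
      have "lc c ys = lc (\<lambda>i. d 0 * e i + d (Suc i)) ys"
        using d(2) ye by (simp add: lc_Cons lc_add_coef lc_scale_coef)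
      moreover have "inI (\<lambda>i. d 0 * e i + d (Suc i)) m"
        using d(1) m_ideal unfolding inI_def by (auto intro: ideal_add ideal_mult2)
      ultimately show "\<exists>c'. inI c' m \<and> lc c ys = lc c' ys" by blast
    qed
    have sys: "\<forall>z\<in>set ys. supp_in z J" using supp by auto
    from Suc.IH[OF len sys cys] obtain I where I: "I \<subseteq> J"
      "\<forall>v::nat\<Rightarrow>'a. supp_in v J \<longrightarrow> (\<exists>c g. supp_in g I \<and> v = (\<lambda>k. lc c ys k + g k))"
      "\<forall>c. supp_in (lc c ys) I \<longrightarrow> lc c ys = (\<lambda>k. 0)"
      by blast
    show ?thesis
    proof (rule exI[of _ I], intro conjI allI impI)
      show "I \<subseteq> J" by fact
    next
      fix v :: "nat \<Rightarrow> 'a" assume "supp_in v J"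
      then obtain c g where "supp_in g I" "v = (\<lambda>k. lc c ys k + g k)" using I(2) by blast
      then show "\<exists>c g. supp_in g I \<and> v = (\<lambda>k. lc c (y # ys) k + g k)"
        by (metis lc_shift)
    next
      fix c assume "supp_in (lc c (y # ys)) I"
      moreover have "lc c (y # ys) = lc (\<lambda>i. c 0 * e i + c (Suc i)) ys"
        using ye by (simp add: lc_Cons lc_add_coef lc_scale_coef)
      ultimately show "lc c (y # ys) = (\<lambda>k. 0)" using I(3) by metis
    qed
  next
    case False
    then obtain p where yp: "y p \<notin> m" unfolding inI_def by auto
    obtain u where u: "u * y p = 1" using unitI[OF yp] by blast
    define \<pi> where "\<pi> = proj p u y"
    define ys' where "ys' = map \<pi> ys"
    have suppy: "supp_in y J" using supp by auto
    have supp': "\<forall>z\<in>set ys'. supp_in z (J - {p})"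
      unfolding ys'_def \<pi>_def using supp proj_supp[of _ J y u p, OF _ suppy u] by auto
    have lcp: "lc c ys' = \<pi> (lc c ys)" for c unfolding ys'_def \<pi>_def by (rule lc_proj)
    have piy: "\<pi> y = (\<lambda>k. 0)" unfolding \<pi>_def using proj_y[of u y p, OF u] .
    have pic: "\<pi> (lc c (y#ys)) = lc (\<lambda>i. c (Suc i)) ys'" for c
      unfolding lc_Cons \<pi>_def proj_lin using piy lcp unfolding \<pi>_def by simp
    have cys: "condm m ys'"
      unfolding condm_def
    proof (intro allI impI)
      fix c assume "inI (lc c ys') m"
      moreover have eq: "lc c ys' = lc (\<lambda>i. if i = 0 then - (lc c ys p * u) else c (i - 1)) (y#ys)"
        unfolding lcp \<pi>_def proj_def by (simp add: lc_Cons algebra_simps)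
      ultimately obtain d where d: "inI d m" "lc c ys' = lc d (y#ys)"
        using cnd unfolding condm_def by metis
      have "\<pi> (lc c ys') = lc c ys'"
        unfolding \<pi>_def by (rule proj_idem) (simp add: lcp \<pi>_def proj_p[of u y p, OF u])
      then have "lc c ys' = lc (\<lambda>i. d (Suc i)) ys'" using d(2) pic by metis
      moreover have "inI (\<lambda>i. d (Suc i)) m" using d(1) unfolding inI_def by auto
      ultimately show "\<exists>c'. inI c' m \<and> lc c ys' = lc c' ys'" by blast
    qed
    obtain I where I: "I \<subseteq> J - {p}"
      "\<forall>v::nat\<Rightarrow>'a. supp_in v (J - {p}) \<longrightarrow> (\<exists>c g. supp_in g I \<and> v = (\<lambda>k. lc c ys' k + g k))"
      "\<forall>c. supp_in (lc c ys') I \<longrightarrow> lc c ys' = (\<lambda>k. 0)"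
      using Suc.IH[OF _ supp' cys] len unfolding ys'_def by auto
    show ?thesis
    proof (rule exI[of _ I], intro conjI allI impI)
      show "I \<subseteq> J" using I(1) by auto
    next
      fix v :: "nat \<Rightarrow> 'a" assume "supp_in v J"
      then have "supp_in (\<pi> v) (J - {p})" unfolding \<pi>_def using proj_supp[of _ J y u p, OF _ suppy u] by blast
      then obtain c g where g: "supp_in g I" "\<pi> v = (\<lambda>k. lc c ys' k + g k)" using I(2) by blast
      have "v = (\<lambda>k. lc (\<lambda>i. if i = 0 then v p * u - lc c ys p * u else c (i - 1)) (y#ys) k + g k)"
      proof
        fix k
        have "\<pi> v k = lc c ys' k + g k" using g(2) by metis
        then have "v k - v p * u * y k = lc c ys k - lc c ys p * u * y k + g k"
          unfolding lcp \<pi>_def proj_def by simp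
        then show "v k = lc (\<lambda>i. if i = 0 then v p * u - lc c ys p * u else c (i - 1)) (y#ys) k + g k"
          by (simp add: lc_Cons algebra_simps)
      qed
      then show "\<exists>c g. supp_in g I \<and> v = (\<lambda>k. lc c (y # ys) k + g k)" using g(1) by blast
    next
      fix c assume sc: "supp_in (lc c (y # ys)) I"
      have "p \<notin> I" using I(1) by auto
      then have "lc c (y#ys) p = 0" using sc unfolding supp_in_def by auto
      then have "\<pi> (lc c (y#ys)) = lc c (y#ys)" unfolding \<pi>_def by (rule proj_idem)
      then have eq: "lc c (y#ys) = lc (\<lambda>i. c (Suc i)) ys'" using pic by metis
      then have "lc (\<lambda>i. c (Suc i)) ys' = (\<lambda>k. 0)" using I(3) sc by metis
      then show "lc c (y # ys) = (\<lambda>k. 0)" using eq by simp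
    qed
  qed
  then show ?case using ys0 by simp
qed

lemma lemL:
  "(\<forall>z\<in>set ys. supp_in z J) \<Longrightarrow> condm m ys \<Longrightarrow>
   \<exists>I\<subseteq>J. (\<forall>v. supp_in v J \<longrightarrow> (\<exists>c g. supp_in g I \<and> v = (\<lambda>k. lc c ys k + g k)))
        \<and> (\<forall>c. supp_in (lc c ys) I \<longrightarrow> lc c ys = (\<lambda>k. 0))"
  by (rule lemL_aux[OF refl])

end



definition frv :: "('a \<Rightarrow> 'a) \<Rightarrow> (nat \<Rightarrow> 'a) \<Rightarrow> (nat \<Rightarrow> 'a)" where
  "frv f v = (\<lambda>k. f (v k))"

locale lrf = lr m for m :: "'a::comm_ring_1 set" +
  fixes fr :: "'a \<Rightarrow> 'a" and P :: "'a set" and x :: 'a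
  assumes fr_add: "fr (a + b) = fr a + fr b" and fr_mult: "fr (a * b) = fr a * fr b"
    and fr_one: "fr 1 = 1"
    and fr_m: "a \<in> m \<Longrightarrow> fr a \<in> P" and P_ideal: "is_ideal P"
    and xP: "a \<in> P \<Longrightarrow> a * x = 0" and x_notin: "x \<notin> P"
begin

lemma fr0[simp]: "fr 0 = 0"
proof -
  have "fr 0 = fr 0 + fr 0" using fr_add[of 0 0] by simp
  then show ?thesis by simp
qed

lemma fr_minus: "fr (- a) = - fr a"
proof -
  have "fr (- a) + fr a = 0" using fr_add[of "-a" a] by simp
  then show ?thesis by (simp add: eq_neg_iff_add_eq_0)
qed

lemma fr_diff: "fr (a - b) = fr a - fr b"
  using fr_add[of a "-b"] fr_minus[of b] by simp

lemma fr_sum: "fr (sum f A) = sum (\<lambda>i. fr (f i)) A"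
  by (induction A rule: infinite_finite_induct) (auto simp: fr_add)

lemma frv_lc: "frv fr (lc c ys) = lc (frv fr c) (map (frv fr) ys)"
  unfolding frv_def lc_def by (simp add: fr_sum fr_mult)

lemma frv_proj: "frv fr (proj p a y w) = proj p (fr a) (frv fr y) (frv fr w)"
  unfolding frv_def proj_def by (simp add: fr_diff fr_mult)

lemma lemL0_aux:
  "length ys = n \<Longrightarrow> (\<forall>z\<in>set ys. supp_in z J) \<Longrightarrow>
   \<exists>I\<subseteq>J. (\<forall>v. supp_in v J \<longrightarrow> (\<exists>c g h. supp_in g I \<and> inI h m \<and> v = (\<lambda>k. lc c ys k + g k + h k)))
        \<and> (\<forall>c g h. supp_in g I \<longrightarrow> inI h P \<longrightarrow> (\<lambda>k. x * fr (g k) + h k) = lc c (map (frv fr) ys) \<longrightarrow> inI g m)"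
proof (induction n arbitrary: ys J)
  case 0
  then have ys: "ys = []" by simp
  show ?case
  proof (rule exI[of _ J], intro conjI allI impI)
    fix v :: "nat \<Rightarrow> 'a" assume "supp_in v J"
    then show "\<exists>c g h. supp_in g J \<and> inI h m \<and> v = (\<lambda>k. lc c ys k + g k + h k)"
      using m0 by (intro exI[of _ "\<lambda>i. 0"] exI[of _ v] exI[of _ "\<lambda>i. 0"]) (auto simp: ys inI_def)
  next
    fix c g h assume h: "inI h P" and eq: "(\<lambda>k. x * fr (g k) + h k) = lc c (map (frv fr) ys)"
    show "inI g m" unfolding inI_def
    proof (rule allI, rule ccontr)
      fix k assume "g k \<notin> m"
      then obtain u where u: "u * g k = 1" using unitI by blast
      have "x * fr (g k) + h k = 0" using fun_cong[OF eq, of k] by (simp add: ys)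
      then have "x * fr (g k) = - h k" by (simp add: eq_neg_iff_add_eq_0)
      then have "x * fr (g k) * fr u = - h k * fr u" by simp
      moreover have "fr (g k) * fr u = 1" using u fr_mult[of u "g k"] fr_one by (simp add: mult.commute)
      ultimately have "x = - h k * fr u" by (simp add: mult.assoc)
      moreover have "- h k * fr u \<in> P" using h P_ideal unfolding inI_def
        by (auto intro: ideal_mult2 ideal_uminus)
      ultimately show False using x_notin by simp
    qed
  qed simp
next
  case (Suc n ys0 J)
  then obtain y ys where ys0: "ys0 = y#ys" and len: "length ys = n" by (cases ys0) auto
  have supp: "\<forall>z\<in>set (y#ys). supp_in z J" using Suc.prems ys0 by simp
  have "\<exists>I\<subseteq>J. (\<forall>v. supp_in v J \<longrightarrow> (\<exists>c g h. supp_in g I \<and> inI h m \<and> v = (\<lambda>k. lc c (y#ys) k + g k + h k)))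
        \<and> (\<forall>c g h. supp_in g I \<longrightarrow> inI h P \<longrightarrow> (\<lambda>k. x * fr (g k) + h k) = lc c (map (frv fr) (y#ys)) \<longrightarrow> inI g m)"
  proof (cases "inI y m")
    case True
    have sys: "\<forall>z\<in>set ys. supp_in z J" using supp by auto
    from Suc.IH[OF len sys] obtain I where I: "I \<subseteq> J"
      "\<forall>v::nat\<Rightarrow>'a. supp_in v J \<longrightarrow> (\<exists>c g h. supp_in g I \<and> inI h m \<and> v = (\<lambda>k. lc c ys k + g k + h k))"
      "\<forall>c g h. supp_in g I \<longrightarrow> inI h P \<longrightarrow> (\<lambda>k. x * fr (g k) + h k) = lc c (map (frv fr) ys) \<longrightarrow> inI g m"
      by blast
    show ?thesis
    proof (rule exI[of _ I], intro conjI allI impI)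
      show "I \<subseteq> J" by fact
    next
      fix v :: "nat \<Rightarrow> 'a" assume "supp_in v J"
      then obtain c g h where "supp_in g I" "inI h m" "v = (\<lambda>k. lc c ys k + g k + h k)" using I(2) by blast
      then show "\<exists>c g h. supp_in g I \<and> inI h m \<and> v = (\<lambda>k. lc c (y # ys) k + g k + h k)"
        by (metis lc_shift)
    next
      fix c g h assume g: "supp_in g I" and h: "inI h P"
        and eq: "(\<lambda>k. x * fr (g k) + h k) = lc c (map (frv fr) (y # ys))"
      define h' where "h' = (\<lambda>k. h k - c 0 * fr (y k))"
      have "(\<lambda>k. x * fr (g k) + h' k) = lc (\<lambda>i. c (Suc i)) (map (frv fr) ys)"
      proof
        fix k
        have "x * fr (g k) + h k = c 0 * fr (y k) + lc (\<lambda>i. c (Suc i)) (map (frv fr) ys) k"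
          using fun_cong[OF eq, of k] by (simp add: lc_Cons frv_def)
        then show "x * fr (g k) + h' k = lc (\<lambda>i. c (Suc i)) (map (frv fr) ys) k"
          unfolding h'_def by (simp add: algebra_simps)
      qed
      moreover have "inI h' P" unfolding h'_def inI_def
        using h True fr_m P_ideal unfolding inI_def by (metis ideal_diff ideal_mult)
      ultimately show "inI g m" using I(3) g by blast
    qed
  next
    case False
    then obtain p where yp: "y p \<notin> m" unfolding inI_def by auto
    obtain u where u: "u * y p = 1" using unitI[OF yp] by blast
    define \<pi> where "\<pi> = proj p u y"
    define \<pi>' where "\<pi>' = proj p (fr u) (frv fr y)"
    define ys' where "ys' = map \<pi> ys"
    have suppy: "supp_in y J" using supp by auto
    have supp': "\<forall>z\<in>set ys'. supp_in z (J - {p})"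
      unfolding ys'_def \<pi>_def using supp proj_supp[of _ J y u p, OF _ suppy u] by auto
    have lcp: "lc c ys' = \<pi> (lc c ys)" for c unfolding ys'_def \<pi>_def by (rule lc_proj)
    have piy: "\<pi> y = (\<lambda>k. 0)" unfolding \<pi>_def using proj_y[of u y p, OF u] .
    have map': "map \<pi>' (map (frv fr) ys) = map (frv fr) ys'"
      unfolding ys'_def \<pi>'_def \<pi>_def by (simp add: frv_proj)
    have pi'y: "\<pi>' (frv fr y) = (\<lambda>k. 0)"
    proof -
      have "fr u * frv fr y p = 1" using u fr_mult[of u "y p"] fr_one by (simp add: frv_def)
      then show ?thesis unfolding \<pi>'_def by (rule proj_y)
    qed
    from Suc.IH[OF _ supp'] len obtain I where I: "I \<subseteq> J - {p}"
      "\<forall>v::nat\<Rightarrow>'a. supp_in v (J - {p}) \<longrightarrow> (\<exists>c g h. supp_in g I \<and> inI h m \<and> v = (\<lambda>k. lc c ys' k + g k + h k))"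
      "\<forall>c g h. supp_in g I \<longrightarrow> inI h P \<longrightarrow> (\<lambda>k. x * fr (g k) + h k) = lc c (map (frv fr) ys') \<longrightarrow> inI g m"
      unfolding ys'_def by auto
    show ?thesis
    proof (rule exI[of _ I], intro conjI allI impI)
      show "I \<subseteq> J" using I(1) by auto
    next
      fix v :: "nat \<Rightarrow> 'a" assume "supp_in v J"
      then have "supp_in (\<pi> v) (J - {p})" unfolding \<pi>_def using proj_supp[of _ J y u p, OF _ suppy u] by blast
      then obtain c g h where g: "supp_in g I" "inI h m" "\<pi> v = (\<lambda>k. lc c ys' k + g k + h k)" using I(2) by blast
      have "v = (\<lambda>k. lc (\<lambda>i. if i = 0 then v p * u - lc c ys p * u else c (i - 1)) (y#ys) k + g k + h k)"
      proof
        fix k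
        have "\<pi> v k = lc c ys' k + g k + h k" using g(3) by metis
        then have "v k - v p * u * y k = lc c ys k - lc c ys p * u * y k + g k + h k"
          unfolding lcp \<pi>_def proj_def by simp
        then show "v k = lc (\<lambda>i. if i = 0 then v p * u - lc c ys p * u else c (i - 1)) (y#ys) k + g k + h k"
          by (simp add: lc_Cons algebra_simps)
      qed
      then show "\<exists>c g h. supp_in g I \<and> inI h m \<and> v = (\<lambda>k. lc c (y # ys) k + g k + h k)" using g(1,2) by blast
    next
      fix c g h assume g: "supp_in g I" and h: "inI h P"
        and eq: "(\<lambda>k. x * fr (g k) + h k) = lc c (map (frv fr) (y # ys))"
      have "p \<notin> I" using I(1) by auto
      then have gp: "g p = 0" using g unfolding supp_in_def by auto
      define h' where "h' = (\<lambda>k. h k - h p * fr u * fr (y k))"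
      have "\<pi>' (\<lambda>k. x * fr (g k) + h k) = (\<lambda>k. x * fr (g k) + h' k)"
        unfolding \<pi>'_def proj_def h'_def frv_def by (auto simp: gp algebra_simps)
      moreover have "\<pi>' (lc c (map (frv fr) (y # ys))) = lc (\<lambda>i. c (Suc i)) (map (frv fr) ys')"
      proof -
        have "\<pi>' (lc c (map (frv fr) (y # ys))) = \<pi>' (\<lambda>k. c 0 * frv fr y k + lc (\<lambda>i. c (Suc i)) (map (frv fr) ys) k)"
          by (simp add: lc_Cons)
        also have "\<dots> = (\<lambda>k. c 0 * \<pi>' (frv fr y) k + \<pi>' (lc (\<lambda>i. c (Suc i)) (map (frv fr) ys)) k)"
          unfolding \<pi>'_def by (rule proj_lin)
        also have "\<dots> = lc (\<lambda>i. c (Suc i)) (map \<pi>' (map (frv fr) ys))"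
          unfolding pi'y unfolding \<pi>'_def lc_proj by simp
        finally show ?thesis unfolding map' .
      qed
      ultimately have "(\<lambda>k. x * fr (g k) + h' k) = lc (\<lambda>i. c (Suc i)) (map (frv fr) ys')"
        using eq by metis
      moreover have "inI h' P" unfolding h'_def inI_def
        using h P_ideal unfolding inI_def by (auto intro: ideal_diff ideal_mult2)
      ultimately show "inI g m" using I(3) g by blast
    qed
  qed
  then show ?case using ys0 by simp
qed

lemma lemL0:
  "(\<forall>z\<in>set ys. supp_in z J) \<Longrightarrow>
   \<exists>I\<subseteq>J. (\<forall>v. supp_in v J \<longrightarrow> (\<exists>c g h. supp_in g I \<and> inI h m \<and> v = (\<lambda>k. lc c ys k + g k + h k)))
        \<and> (\<forall>c g h. supp_in g I \<longrightarrow> inI h P \<longrightarrow> (\<lambda>k. x * fr (g k) + h k) = lc c (map (frv fr) ys) \<longrightarrow> inI g m)"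
  by (rule lemL0_aux[OF refl])

end



lemma vecs_supp: "v \<in> vecs n \<longleftrightarrow> supp_in v {..<n}"
  unfolding vecs_def supp_in_def by auto

definition ev :: "nat \<Rightarrow> nat \<Rightarrow> 'a::comm_ring_1" where
  "ev i = (\<lambda>k. if k = i then 1 else 0)"

lemma restrict_lc: "lc c ys = lc (\<lambda>i. if i < length ys then c i else 0) ys"
  by (rule lc_cong) auto

lemma restrict_vecs: "(\<lambda>i. if i < n then c i else 0) \<in> vecs n"
  unfolding vecs_def by auto

context lr
begin

lemma stepM:
  fixes scale :: "'a \<Rightarrow> 'm::ab_group_add \<Rightarrow> 'm" and eps :: "(nat \<Rightarrow> 'a) \<Rightarrow> 'm"
  assumes md: "module scale"
    and eps_add: "\<forall>v\<in>vecs n0. \<forall>w\<in>vecs n0. eps (\<lambda>k. v k + w k) = eps v + eps w"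
    and eps_scale: "\<forall>c. \<forall>v\<in>vecs n0. eps (\<lambda>k. c * v k) = scale c (eps v)"
    and eps_surj: "eps ` vecs n0 = UNIV"
    and eps_ker: "{v \<in> vecs n0. eps v = 0} = (\<lambda>v. lc v Y) ` vecs (length Y)"
    and Ysupp: "\<forall>z\<in>set Y. supp_in z {..<n0}"
    and cnd: "condm m Y"
  shows "free_module scale"
proof -
  interpret module scale by (rule md)
  obtain I where I: "I \<subseteq> {..<n0}"
    "\<forall>v::nat\<Rightarrow>'a. supp_in v {..<n0} \<longrightarrow> (\<exists>c g. supp_in g I \<and> v = (\<lambda>k. lc c Y k + g k))"
    "\<forall>c. supp_in (lc c Y) I \<longrightarrow> lc c Y = (\<lambda>k. 0)"
    using lemL[OF Ysupp cnd] by blast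
  have finI: "finite I" using finite_subset[OF I(1)] by simp
  have eps0: "eps (\<lambda>k. 0) = 0"
  proof -
    have "(\<lambda>k::nat. 0::'a) \<in> vecs n0" unfolding vecs_def by auto
    from eps_add[THEN bspec, OF this, THEN bspec, OF this] show ?thesis by simp
  qed
  have lcvec: "lc c Y \<in> vecs n0" for c unfolding vecs_supp using Ysupp by (intro lc_supp) auto
  have kerlc: "eps (lc c Y) = 0" for c
  proof -
    have "lc c Y = lc (\<lambda>i. if i < length Y then c i else 0) Y" by (rule restrict_lc)
    then have "lc c Y \<in> (\<lambda>v. lc v Y) ` vecs (length Y)" using restrict_vecs by blast
    then have "lc c Y \<in> {v \<in> vecs n0. eps v = 0}" unfolding eps_ker .
    then show ?thesis by simp
  qed
  have kerI: "v \<in> vecs n0 \<Longrightarrow> eps v = 0 \<Longrightarrow> supp_in v I \<Longrightarrow> v = (\<lambda>k. 0)" for v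
  proof -
    assume "v \<in> vecs n0" "eps v = 0" "supp_in v I"
    then have "v \<in> {v \<in> vecs n0. eps v = 0}" by simp
    then obtain c where "v = lc c Y" unfolding eps_ker by blast
    then show ?thesis using I(3) \<open>supp_in v I\<close> by metis
  qed
  have ev_vec: "i \<in> I \<Longrightarrow> (ev i :: nat \<Rightarrow> 'a) \<in> vecs n0" for i using I(1) unfolding vecs_def ev_def by auto
  have eps_sum: "finite T \<Longrightarrow> T \<subseteq> I \<Longrightarrow>
      eps (\<lambda>k. \<Sum>i\<in>T. c i * ev i k) = (\<Sum>i\<in>T. scale (c i) (eps (ev i)))
      \<and> (\<lambda>k. \<Sum>i\<in>T. c i * ev i k) \<in> vecs n0" for T c
  proof (induction T rule: finite_induct)
    case empty
    then show ?case using eps0 by (simp add: vecs_def)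
  next
    case (insert a T)
    have eva: "(ev a :: nat \<Rightarrow> 'a) \<in> vecs n0" using ev_vec[of a] insert.prems by simp
    have va: "(\<lambda>k. c a * ev a k) \<in> vecs n0" using eva unfolding vecs_def by auto
    have e1: "eps (\<lambda>k. c a * ev a k) = scale (c a) (eps (ev a))"
      using eps_scale[rule_format, OF eva] by simp
    have eq: "(\<lambda>k. \<Sum>i\<in>insert a T. c i * ev i k) = (\<lambda>k. c a * ev a k + (\<Sum>i\<in>T. c i * ev i k))"
      using insert.hyps by simp
    have IH: "eps (\<lambda>k. \<Sum>i\<in>T. c i * ev i k) = (\<Sum>i\<in>T. scale (c i) (eps (ev i)))"
       "(\<lambda>k. \<Sum>i\<in>T. c i * ev i k) \<in> vecs n0" using insert.IH insert.prems by auto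
    have e2: "eps (\<lambda>k. c a * ev a k + (\<Sum>i\<in>T. c i * ev i k)) = eps (\<lambda>k. c a * ev a k) + eps (\<lambda>k. \<Sum>i\<in>T. c i * ev i k)"
      using eps_add[THEN bspec, OF va, THEN bspec, OF IH(2)] by simp
    have v2: "(\<lambda>k. c a * ev a k + (\<Sum>i\<in>T. c i * ev i k)) \<in> vecs n0"
      using va IH(2) unfolding vecs_def by simp
    have s: "(\<Sum>i\<in>insert a T. scale (c i) (eps (ev i))) = scale (c a) (eps (ev a)) + (\<Sum>i\<in>T. scale (c i) (eps (ev i)))"
      using insert.hyps by (rule sum.insert)
    show ?case unfolding eq s e2 e1 IH(1) using v2 by (rule conjI[OF refl])
  qed
  have supp_sum: "supp_in g I \<Longrightarrow> g = (\<lambda>k. \<Sum>i\<in>I. g i * ev i k)" for g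
  proof
    fix k assume g: "supp_in g I"
    have "(\<Sum>i\<in>I. g i * ev i k) = (if k \<in> I then g k else 0)"
      unfolding ev_def using finI by (simp add: if_distrib cong: if_cong)
    then show "g k = (\<Sum>i\<in>I. g i * ev i k)" using g unfolding supp_in_def by auto
  qed
  have one_ne: "(1::'a) \<noteq> 0" using one_notin m0 by auto
  define B where "B = (\<lambda>i. eps (ev i)) ` I"
  have spanB: "span B = UNIV"
  proof (rule set_eqI, rule iffI)
    fix w :: 'm
    obtain v where v: "v \<in> vecs n0" "w = eps v" using eps_surj by (metis UNIV_I imageE)
    then obtain c g where cg: "supp_in g I" "v = (\<lambda>k. lc c Y k + g k)" using I(2) vecs_supp by blast
    have gv: "g \<in> vecs n0" using cg(1) I(1) unfolding vecs_supp supp_in_def by auto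
    have "w = eps (lc c Y) + eps g" using v cg eps_add[THEN bspec, OF lcvec, THEN bspec, OF gv] by simp
    also have "\<dots> = eps g" using kerlc by simp
    also have "\<dots> = (\<Sum>i\<in>I. scale (g i) (eps (ev i)))"
      using eps_sum[OF finI subset_refl, of g] supp_sum[OF cg(1)] by simp
    finally have "w = (\<Sum>i\<in>I. scale (g i) (eps (ev i)))" .
    moreover have "(\<Sum>i\<in>I. scale (g i) (eps (ev i))) \<in> span B"
      by (intro span_sum span_scale span_base) (auto simp: B_def)
    ultimately show "w \<in> span B" by simp
  qed simp
  have inj: "inj_on (\<lambda>i. eps (ev i)) I"
  proof (rule inj_onI, rule ccontr)
    fix i i' assume ii: "i \<in> I" "i' \<in> I" "eps (ev i) = eps (ev i')" "i \<noteq> i'"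
    define cc where "cc = (\<lambda>l. if l = i then (1::'a) else -1)"
    have "eps (\<lambda>k. \<Sum>l\<in>{i, i'}. cc l * ev l k) = (\<Sum>l\<in>{i, i'}. scale (cc l) (eps (ev l)))
          \<and> (\<lambda>k. \<Sum>l\<in>{i, i'}. cc l * ev l k) \<in> vecs n0"
      using ii by (intro eps_sum) auto
    moreover have "(\<Sum>l\<in>{i, i'}. scale (cc l) (eps (ev l))) = 0"
      using ii by (simp add: cc_def)
    moreover have "supp_in (\<lambda>k. \<Sum>l\<in>{i, i'}. cc l * ev l k) I"
      using ii unfolding supp_in_def ev_def by auto
    ultimately have "(\<lambda>k. \<Sum>l\<in>{i, i'}. cc l * ev l k) = (\<lambda>k. 0)" using kerI by auto
    then have "(\<Sum>l\<in>{i, i'}. cc l * ev l i) = 0" by metis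
    then show False using ii one_ne by (simp add: cc_def ev_def)
  qed
  have indB: "\<not> dependent B"
  proof
    assume "dependent B"
    then obtain t u where tu: "finite t" "t \<subseteq> B" "(\<Sum>v\<in>t. scale (u v) v) = 0" "\<exists>v\<in>t. u v \<noteq> 0"
      unfolding dependent_explicit by blast
    define T where "T = {i\<in>I. eps (ev i) \<in> t}"
    have TI: "T \<subseteq> I" and finT: "finite T" using finI unfolding T_def by auto
    have tT: "t = (\<lambda>i. eps (ev i)) ` T" using tu(2) unfolding T_def B_def by auto
    have injT: "inj_on (\<lambda>i. eps (ev i)) T" using inj_on_subset[OF inj TI] .
    have "(\<Sum>i\<in>T. scale (u (eps (ev i))) (eps (ev i))) = 0"
      using tu(3) unfolding tT sum.reindex[OF injT] by (simp add: o_def)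
    then have z: "eps (\<lambda>k. \<Sum>i\<in>T. u (eps (ev i)) * ev i k) = 0"
      and vz: "(\<lambda>k. \<Sum>i\<in>T. u (eps (ev i)) * ev i k) \<in> vecs n0"
      using eps_sum[OF finT TI, of "\<lambda>i. u (eps (ev i))"] by auto
    have "supp_in (\<lambda>k. \<Sum>i\<in>T. u (eps (ev i)) * ev i k) I"
      using TI unfolding supp_in_def ev_def by (auto intro!: sum.neutral)
    then have zz: "(\<lambda>k. \<Sum>i\<in>T. u (eps (ev i)) * ev i k) = (\<lambda>k. 0)" using kerI z vz by blast
    obtain v where v: "v \<in> t" "u v \<noteq> 0" using tu(4) by blast
    then obtain i where i: "i \<in> T" "v = eps (ev i)" using tT by blast
    have "(\<Sum>l\<in>T. u (eps (ev l)) * ev l i) = u (eps (ev i))"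
      using finT i(1) unfolding ev_def by (simp add: if_distrib cong: if_cong)
    then have "u (eps (ev i)) = 0" using fun_cong[OF zz, of i] by simp
    then show False using v i by simp
  qed
  show ?thesis unfolding free_module_def using indB spanB by blast
qed

end



lemma exact_E2:
  assumes ex: "{v \<in> vecs (length X). lc v X = (\<lambda>_. 0)} = (\<lambda>v. lc v Y) ` vecs (length Y)"
  shows "lc (lc c Y) X = (\<lambda>_. 0)"
proof -
  have "lc c Y = lc (\<lambda>i. if i < length Y then c i else 0) Y" by (rule restrict_lc)
  then have "lc c Y \<in> (\<lambda>v. lc v Y) ` vecs (length Y)" using restrict_vecs by blast
  then have "lc c Y \<in> {v \<in> vecs (length X). lc v X = (\<lambda>_. 0)}" unfolding ex .
  then show ?thesis by simp
qed

lemma exact_E1: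
  assumes ex: "{v \<in> vecs (length X). lc v X = (\<lambda>_. 0)} = (\<lambda>v. lc v Y) ` vecs (length Y)"
    and "v \<in> vecs (length X)" "lc v X = (\<lambda>_. 0)"
  shows "\<exists>c. v = lc c Y"
proof -
  have "v \<in> {v \<in> vecs (length X). lc v X = (\<lambda>_. 0)}" using assms(2,3) by simp
  then show ?thesis unfolding ex by blast
qed

context lr
begin

lemma stepD:
  assumes Ysupp: "\<forall>z\<in>set Y. supp_in z {..<length X}"
    and ex: "{v \<in> vecs (length X). lc v X = (\<lambda>_. 0)} = (\<lambda>v. lc v Y) ` vecs (length Y)"
    and z: "z \<noteq> 0" "\<forall>a\<in>m. a * z = 0"
    and cY: "condm m Y"
  shows "condm m X"
  unfolding condm_def
proof (intro allI impI)
  fix c assume cm: "inI (lc c X) m"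
  obtain I where I: "I \<subseteq> {..<length X}"
    "\<forall>v::nat\<Rightarrow>'a. supp_in v {..<length X} \<longrightarrow> (\<exists>c g. supp_in g I \<and> v = (\<lambda>k. lc c Y k + g k))"
    "\<forall>c. supp_in (lc c Y) I \<longrightarrow> lc c Y = (\<lambda>k. 0)"
    using lemL[OF Ysupp cY] by blast
  define v where "v = (\<lambda>i. if i < length X then c i else 0)"
  have lv: "lc c X = lc v X" unfolding v_def by (rule restrict_lc)
  have "supp_in v {..<length X}" unfolding v_def supp_in_def by auto
  then obtain c1 g where g: "supp_in g I" "v = (\<lambda>k. lc c1 Y k + g k)" using I(2) by blast
  have lg: "lc v X = lc g X"
    unfolding g(2) lc_add_coef exact_E2[OF ex] by simp
  have gm: "inI g m"
    unfolding inI_def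
  proof (rule allI, rule ccontr)
    fix p assume "g p \<notin> m"
    then obtain w where w: "w * g p = 1" using unitI by blast
    define zg where "zg = (\<lambda>k. z * g k)"
    have zgv: "zg \<in> vecs (length X)" unfolding vecs_def zg_def
    proof (intro CollectI allI impI)
      fix k assume "length X \<le> k"
      then have "k \<notin> I" using I(1) by auto
      then show "z * g k = 0" using g(1) unfolding supp_in_def by simp
    qed
    have "lc zg X = (\<lambda>k. z * lc g X k)" unfolding zg_def by (rule lc_scale_coef)
    also have "\<dots> = (\<lambda>_. 0)"
    proof
      fix k
      have "inI (lc g X) m" using cm lv lg by simp
      then have "lc g X k \<in> m" unfolding inI_def by blast
      then have "lc g X k * z = 0" using z(2) by blast
      then show "z * lc g X k = 0" by (simp add: mult.commute)
    qed
    finally obtain c2 where c2: "zg = lc c2 Y" using exact_E1[OF ex zgv] by blast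
    have "supp_in zg I" using g(1) unfolding zg_def supp_in_def by auto
    then have "supp_in (lc c2 Y) I" by (simp add: c2)
    then have "lc c2 Y = (\<lambda>k. 0)" using I(3) by blast
    then have "zg = (\<lambda>k. 0)" using c2 by simp
    from fun_cong[OF this, of p] have "z * g p = 0" unfolding zg_def by simp
    then have "z * (g p * w) = 0" by (simp add: mult.assoc[symmetric])
    then show False using w z(1) by (simp add: mult.commute)
  qed
  show "\<exists>c'. inI c' m \<and> lc c X = lc c' X" by (intro exI[of _ g]) (simp add: lv lg gm)
qed

end

context lrf
begin

lemma stepF:
  assumes Ysupp: "\<forall>z\<in>set Y. supp_in z {..<length X}"
    and ex: "{v \<in> vecs (length X). lc v X = (\<lambda>_. 0)} = (\<lambda>v. lc v Y) ` vecs (length Y)"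
    and frob: "{v \<in> vecs (length X). lc v (map (frv fr) X) = (\<lambda>_. 0)}
                 \<subseteq> (\<lambda>v. lc v (map (frv fr) Y)) ` vecs (length Y)"
  shows "condm m X"
  unfolding condm_def
proof (intro allI impI)
  fix c assume cm: "inI (lc c X) m"
  obtain I where I: "I \<subseteq> {..<length X}"
    "\<forall>v::nat\<Rightarrow>'a. supp_in v {..<length X} \<longrightarrow> (\<exists>c g h. supp_in g I \<and> inI h m \<and> v = (\<lambda>k. lc c Y k + g k + h k))"
    "\<forall>c g h. supp_in g I \<longrightarrow> inI h P \<longrightarrow> (\<lambda>k. x * fr (g k) + h k) = lc c (map (frv fr) Y) \<longrightarrow> inI g m"
    using lemL0[OF Ysupp] by blast
  define v where "v = (\<lambda>i. if i < length X then c i else 0)"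
  have lv: "lc c X = lc v X" unfolding v_def by (rule restrict_lc)
  have vv: "v \<in> vecs (length X)" unfolding v_def by (rule restrict_vecs)
  have "supp_in v {..<length X}" unfolding v_def supp_in_def by auto
  then obtain c1 g h where g: "supp_in g I" "inI h m" "v = (\<lambda>k. lc c1 Y k + g k + h k)" using I(2) by blast
  define w where "w = (\<lambda>k. x * fr (v k))"
  have wv: "w \<in> vecs (length X)" using vv unfolding w_def vecs_def by auto
  have "lc w (map (frv fr) X) = (\<lambda>k. x * lc (frv fr v) (map (frv fr) X) k)"
    unfolding w_def using lc_scale_coef[of x "frv fr v"] by (simp add: frv_def)
  also have "\<dots> = (\<lambda>k. x * fr (lc v X k))" unfolding frv_lc[symmetric] by (simp add: frv_def)
  also have "\<dots> = (\<lambda>_. 0)"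
  proof
    fix k
    have "inI (lc v X) m" using cm lv by simp
    then have "lc v X k \<in> m" unfolding inI_def by blast
    then have "fr (lc v X k) \<in> P" by (rule fr_m)
    then show "x * fr (lc v X k) = 0" using xP by (metis mult.commute)
  qed
  finally have "w \<in> {v \<in> vecs (length X). lc v (map (frv fr) X) = (\<lambda>_. 0)}" using wv by simp
  then have "w \<in> (\<lambda>v. lc v (map (frv fr) Y)) ` vecs (length Y)" using frob by (rule rev_subsetD)
  then obtain u where u: "w = lc u (map (frv fr) Y)" by blast
  have eqn: "(\<lambda>k. x * fr (g k) + 0) = lc (\<lambda>i. u i - x * fr (c1 i)) (map (frv fr) Y)"
  proof
    fix k
    have "fr (h k) \<in> P" using g(2) fr_m unfolding inI_def by blast
    then have "fr (h k) * x = 0" by (rule xP)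
    then have hk: "x * fr (h k) = 0" by (simp add: mult.commute)
    have "w k = x * fr (lc c1 Y k) + x * fr (g k) + x * fr (h k)"
      unfolding w_def g(3) by (simp add: fr_add distrib_left)
    moreover have "x * fr (lc c1 Y k) = lc (\<lambda>i. x * fr (c1 i)) (map (frv fr) Y) k"
      using fun_cong[OF frv_lc[of c1 Y], of k] lc_scale_coef[of x "frv fr c1" "map (frv fr) Y"]
      by (simp add: frv_def)
    ultimately have "w k = lc (\<lambda>i. x * fr (c1 i)) (map (frv fr) Y) k + x * fr (g k)"
      using hk by simp
    then show "x * fr (g k) + 0 = lc (\<lambda>i. u i - x * fr (c1 i)) (map (frv fr) Y) k"
      unfolding lc_diff_coef using u by (simp add: algebra_simps)
  qed
  have P0: "inI (\<lambda>k. 0) P" using P_ideal ideal_0 unfolding inI_def by blast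
  have gm: "inI g m" using I(3)[rule_format, OF g(1) P0 eqn] .
  have lg: "lc v X = lc (\<lambda>k. g k + h k) X"
  proof -
    have "v = (\<lambda>k. lc c1 Y k + (g k + h k))" unfolding g(3) by (simp add: add.assoc)
    then have "lc v X = (\<lambda>k'. lc (lc c1 Y) X k' + lc (\<lambda>k. g k + h k) X k')"
      by (simp add: lc_add_coef)
    then show ?thesis using exact_E2[OF ex, of c1] by simp
  qed
  have "inI (\<lambda>k. g k + h k) m" using gm g(2) m_ideal unfolding inI_def by (simp add: ideal_add)
  then show "\<exists>c'. inI c' m \<and> lc c X = lc c' X" by (intro exI[of _ "\<lambda>k. g k + h k"]) (simp add: lv lg)
qed

end



definition colsM :: "nat \<Rightarrow> nat \<Rightarrow> (nat \<Rightarrow> nat \<Rightarrow> 'a::comm_ring_1) \<Rightarrow> (nat \<Rightarrow> 'a) list" where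
  "colsM mm nn A = map (\<lambda>l k. if k < mm then A k l else 0) [0..<nn]"

lemma colsM_len[simp]: "length (colsM mm nn A) = nn"
  by (simp add: colsM_def)

lemma colsM_supp: "\<forall>z\<in>set (colsM mm nn A). supp_in z {..<mm}"
  by (auto simp: colsM_def supp_in_def)

lemma mat_lc: "mat_app mm nn A = (\<lambda>v. lc v (colsM mm nn A))"
proof (rule ext, rule ext)
  fix v k
  show "mat_app mm nn A v k = lc v (colsM mm nn A) k"
    unfolding mat_app_def lc_def colsM_len
    by (auto simp: colsM_def mult.commute intro!: sum.cong)
qed

lemma colsM_frob: "f 0 = 0 \<Longrightarrow> map (frv f) (colsM mm nn A) = colsM mm nn (\<lambda>k l. f (A k l))"
  by (auto simp: colsM_def frv_def fun_eq_iff)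

lemma (in lr) soc_aux:
  fixes n :: nat
  assumes nz: "\<forall>z. (\<forall>a\<in>m. a * z = 0) \<longrightarrow> z = 0"
  shows "(\<forall>f. (\<forall>i<n. f i \<in> m) \<longrightarrow> (\<Prod>i<n. f i) * y = 0) \<Longrightarrow> y = 0"
proof (induction n arbitrary: y)
  case 0
  then show ?case by simp
next
  case (Suc n)
  have "\<forall>a\<in>m. a * y = 0"
  proof
    fix a assume a: "a \<in> m"
    have "\<forall>f. (\<forall>i<n. f i \<in> m) \<longrightarrow> (\<Prod>i<n. f i) * (a * y) = 0"
    proof (intro allI impI)
      fix f :: "nat \<Rightarrow> 'a" assume f: "\<forall>i<n. f i \<in> m"
      define f' where "f' = f(n := a)"
      have "\<forall>i<Suc n. f' i \<in> m" using f a unfolding f'_def by auto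
      then have "(\<Prod>i<Suc n. f' i) * y = 0" using Suc.prems by blast
      moreover have "(\<Prod>i<n. f' i) = (\<Prod>i<n. f i)" unfolding f'_def by (intro prod.cong) auto
      ultimately show "(\<Prod>i<n. f i) * (a * y) = 0" unfolding f'_def
        by (simp add: mult.assoc mult.commute mult.left_commute)
    qed
    then show "a * y = 0" using Suc.IH by blast
  qed
  then show ?case using nz by blast
qed




theorem proposition1p1:
  fixes scale :: "'a::comm_ring_1 \<Rightarrow> 'm::ab_group_add \<Rightarrow> 'm"
    and j r :: nat
  assumes "prime (CHAR('a))"
    and "noetherian_ring TYPE('a)"
    and "local_ring TYPE('a)"
    and "\<not> annihilator (ideal_pow (max_ideal TYPE('a)) (CHAR('a)))
             \<subseteq> ideal_pow (max_ideal TYPE('a)) (CHAR('a))"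
    and "module scale"
    and "fin_gen_module scale"
    and "j \<ge> 1" and "r \<ge> 1"
    and "tor_frob_vanishes scale j r"
  shows "free_module scale"
proof -
  define p where "p = CHAR('a)"
  define q where "q = p ^ r"
  define m where "m = max_ideal TYPE('a)"
  define P where "P = ideal_pow m p"
  have ex1: "\<exists>!m::'a set. maximal_ideal m" using assms(3) unfolding local_ring_def .
  have maxm: "maximal_ideal m" unfolding m_def max_ideal_def using theI'[OF ex1] .
  have uniq: "maximal_ideal m' \<Longrightarrow> m' = m" for m' using ex1 maxm by blast
  have mI: "is_ideal m" using maxm unfolding maximal_ideal_def by blast
  have one: "1 \<notin> m"
  proof
    assume "1 \<in> m"
    then have "\<forall>a. a \<in> m" using ideal_mult2[OF mI, of 1] by simp
    then show False using maxm unfolding maximal_ideal_def by auto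
  qed
  interpret lr m
    by unfold_locales (use mI one unit_of_maximal[OF uniq] in auto)
  obtain x where x: "x \<in> annihilator P" "x \<notin> P"
    using assms(4) unfolding P_def m_def p_def by blast
  have Pid: "is_ideal P" unfolding P_def ideal_pow_def by (rule ideal_gen_ideal)
  have p1: "p \<ge> 1" using assms(1) unfolding p_def using prime_ge_1_nat by blast
  have qp: "q \<ge> p"
  proof -
    obtain r' where "r = Suc r'" using assms(8) by (cases r) auto
    then have "q = p * p ^ r'" unfolding q_def by simp
    moreover have "p ^ r' \<ge> 1" using p1 by simp
    ultimately show ?thesis by simp
  qed
  have q0: "q > 0" using qp p1 by simp
  have gen: "(\<Prod>i<p. f i) \<in> P" if "\<forall>i<p. f i \<in> m" for f
    unfolding P_def ideal_pow_def using that by (intro subsetD[OF ideal_gen_sup]) blast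
  have fr_m: "a ^ q \<in> P" if a: "a \<in> m" for a
  proof -
    have "(\<Prod>i<p. a) \<in> P" using gen[of "\<lambda>_. a"] a by simp
    then have ap: "a ^ p \<in> P" by simp
    have "a ^ q = a ^ (q - p) * a ^ p" using qp by (simp add: power_add[symmetric])
    then show ?thesis using ideal_mult[OF Pid ap] by simp
  qed
  have xP: "c \<in> P \<Longrightarrow> c * x = 0" for c using x(1) unfolding annihilator_def by blast
  interpret lrf m "\<lambda>a. a ^ q" P x
  proof unfold_locales
    show "(a + b) ^ q = a ^ q + b ^ q" for a b :: 'a
      using freshmans_dream'[OF assms(1), of q r] unfolding q_def p_def by simp
    show "(a * b) ^ q = a ^ q * b ^ q" for a b :: 'a by (rule power_mult_distrib)
  qed (use fr_m Pid xP x(2) in auto)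
  have soc: "\<exists>z. z \<noteq> 0 \<and> (\<forall>a\<in>m. a * z = 0)"
  proof (rule ccontr)
    assume "\<not> ?thesis"
    then have nz: "\<forall>z. (\<forall>a\<in>m. a * z = 0) \<longrightarrow> z = 0" by blast
    have "x = 0"
      by (rule soc_aux[OF nz, of p]) (use gen xP in blast)
    then show False using x(2) Pid ideal_0 by blast
  qed
  then obtain z where z: "z \<noteq> 0" "\<forall>a\<in>m. a * z = 0" by blast
  obtain b d eps where FR: "free_resolution scale b d eps"
    and H: "{v \<in> vecs (b j). mat_app (b (j - 1)) (b j) (frob_mat r (d (j - 1))) v = (\<lambda>_. 0)}
          \<subseteq> mat_app (b j) (b (Suc j)) (frob_mat r (d j)) ` vecs (b (Suc j))"
    using assms(9) unfolding tor_frob_vanishes_def by blast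
  define C where "C i = colsM (b i) (b (Suc i)) (d i)" for i
  have lenC: "length (C i) = b (Suc i)" for i unfolding C_def by simp
  have Csupp: "\<forall>zz\<in>set (C (Suc i)). supp_in zz {..<length (C i)}" for i
    unfolding lenC unfolding C_def by (rule colsM_supp)
  have exact: "{v \<in> vecs (length (C i)). lc v (C i) = (\<lambda>_. 0)} = (\<lambda>v. lc v (C (Suc i))) ` vecs (length (C (Suc i)))" for i
    using FR unfolding free_resolution_def C_def mat_lc colsM_len by blast
  have frobC: "map (frv (\<lambda>a. a ^ q)) (C i) = colsM (b i) (b (Suc i)) (frob_mat r (d i))" for i
    unfolding C_def frob_mat_def q_def[symmetric] p_def[symmetric] using q0 by (intro colsM_frob) simp
  obtain i0 where j: "j = Suc i0" using assms(7) by (cases j) auto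
  have frob: "{v \<in> vecs (length (C i0)). lc v (map (frv (\<lambda>a. a ^ q)) (C i0)) = (\<lambda>_. 0)}
                 \<subseteq> (\<lambda>v. lc v (map (frv (\<lambda>a. a ^ q)) (C (Suc i0)))) ` vecs (length (C (Suc i0)))"
    using H unfolding frobC lenC j mat_lc by simp
  have c0: "condm m (C i0)" by (rule stepF[OF Csupp exact frob])
  have down: "condm m (C n) \<Longrightarrow> condm m (C 0)" for n
  proof (induction n)
    case (Suc n)
    then show ?case using stepD[OF Csupp exact z] by blast
  qed simp
  have cC0: "condm m (C 0)" using down[OF c0] .
  have eps_ker: "{v \<in> vecs (b 0). eps v = 0} = (\<lambda>v. lc v (C 0)) ` vecs (length (C 0))"
    using FR unfolding free_resolution_def C_def mat_lc colsM_len by (simp add: One_nat_def)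
  have C0supp: "\<forall>zz\<in>set (C 0). supp_in zz {..<b 0}" unfolding C_def by (rule colsM_supp)
  show ?thesis
    by (rule stepM[OF assms(5) _ _ _ eps_ker C0supp cC0]) (use FR in \<open>auto simp: free_resolution_def\<close>)
qed


end
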